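(* Let $\Omega\subset\mathbb{R}^{n+m}$ be a bounded open set, $s\in(0,1)$ and $p\in(1,\infty)$. There is a constant $C>0$ such that \[ \|u\|_{L^p(\Omega)}\le C[u]_{\mathcal W^{s,p}(\mathbb{R}^{n+m})}\qquad\forall u\in\widetilde{\mathcal W}^{s,p}(\Omega). \]
   Context: Points of $\mathbb{R}^{n+m}$ are $(x,y)$, $x\in\mathbb{R}^n$, $y\in\mathbb{R}^m$. \[ [u]^p_{\mathcal W^{s,p}(\mathbb{R}^{n+m})}=\int_{\mathbb{R}^{n+m}}\int_{\mathbb{R}^n}\frac{|u(x,y)-u(z,y)|^p}{|x-z|^{n+sp}}\,dz\,dx\,dy+\int_{\mathbb{R}^{n+m}}\int_{\mathbb{R}^m}\frac{|u(x,y)-u(x,w)|^p}{|y-w|^{m+sp}}\,dw\,dx\,dy, \] and $\widetilde{\mathcal W}^{s,p}(\Omega)$ is the set of functions $u\in L^p(\mathbb{R}^{n+m})$ with $[u]_{\mathcal W^{s,p}(\mathbb{R}^{n+m})}<\infty$ and $u\equiv0$ in $\mathbb{R}^{n+m}\setminus\Omega$. *)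

theory Defs
  imports "HOL-Analysis.Analysis"
begin

text \<open>Points of R^(n+m) are pairs (x,y) with x in 'a (dimension n = DIM('a)) and
  y in 'b (dimension m = DIM('b)). Lebesgue measure on the product is lborel.\<close>

definition aniso_seminorm_p ::
  "real \<Rightarrow> real \<Rightarrow> ('a::euclidean_space \<times> 'b::euclidean_space \<Rightarrow> real) \<Rightarrow> ennreal" where
  "aniso_seminorm_p s p u =
     (\<integral>\<^sup>+ w. (\<integral>\<^sup>+ z. ennreal (\<bar>u (fst w, snd w) - u (z, snd w)\<bar> powr p
                 / norm (fst w - z) powr (real DIM('a) + s * p)) \<partial>lborel) \<partial>lborel)
   + (\<integral>\<^sup>+ w. (\<integral>\<^sup>+ v. ennreal (\<bar>u (fst w, snd w) - u (fst w, v)\<bar> powr p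
                 / norm (snd w - v) powr (real DIM('b) + s * p)) \<partial>lborel) \<partial>lborel)"

definition aniso_seminorm ::
  "real \<Rightarrow> real \<Rightarrow> ('a::euclidean_space \<times> 'b::euclidean_space \<Rightarrow> real) \<Rightarrow> real" where
  "aniso_seminorm s p u = enn2real (aniso_seminorm_p s p u) powr (1 / p)"

definition Lp_norm_on :: "real \<Rightarrow> ('a::euclidean_space \<Rightarrow> real) \<Rightarrow> 'a set \<Rightarrow> real" where
  "Lp_norm_on p u A = enn2real (\<integral>\<^sup>+ w. ennreal (\<bar>u w\<bar> powr p) * indicator A w \<partial>lborel) powr (1 / p)"

definition aniso_W_tilde ::
  "real \<Rightarrow> real \<Rightarrow> ('a::euclidean_space \<times> 'b::euclidean_space) set
     \<Rightarrow> ('a \<times> 'b \<Rightarrow> real) set" where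
  "aniso_W_tilde s p \<Omega> = {u. u \<in> borel_measurable lborel
       \<and> (\<integral>\<^sup>+ w. ennreal (\<bar>u w\<bar> powr p) \<partial>lborel) < \<infinity>
       \<and> aniso_seminorm_p s p u < \<infinity>
       \<and> (\<forall>w. w \<notin> \<Omega> \<longrightarrow> u w = 0)}"

end

theory Submission
  imports Defs
begin

lemma pointwise_bound:
  fixes \<Omega> :: "('a::euclidean_space \<times> 'b::euclidean_space) set"
    and u :: "'a \<times> 'b \<Rightarrow> real"
  assumes R: "R > 0" and RO: "\<forall>w\<in>\<Omega>. norm w \<le> R"
    and zero: "\<forall>w. w \<notin> \<Omega> \<longrightarrow> u w = 0"
    and p: "p > 0" and d: "d > 0"
  shows "ennreal (\<bar>u w\<bar> powr p) * ennreal (unit_ball_vol (real DIM('a)) * R ^ DIM('a) / (4*R) powr d)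
     \<le> (\<integral>\<^sup>+ z. ennreal (\<bar>u (fst w, snd w) - u (z, snd w)\<bar> powr p
                 / norm (fst w - z) powr d) \<partial>lborel)"
proof (cases "u w = 0")
  case True
  then show ?thesis by simp
next
  case False
  then have wO: "w \<in> \<Omega>" using zero by metis
  have nx: "norm (fst w) \<le> R" using RO wO norm_fst_le[of "fst w" "snd w"] by auto
  obtain e :: 'a where e: "e \<in> Basis" using nonempty_Basis by blast
  have ne: "norm e = 1" using e by simp
  define c where "c = fst w + (3*R) *\<^sub>R e"
  define K where "K = \<bar>u w\<bar> powr p / (4*R) powr d"
  have K0: "K \<ge> 0" unfolding K_def by simp
  have pt: "ennreal K * indicator (ball c R) z
      \<le> ennreal (\<bar>u (fst w, snd w) - u (z, snd w)\<bar> powr p / norm (fst w - z) powr d)" for z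
  proof (cases "z \<in> ball c R")
    case False then show ?thesis by simp
  next
    case True
    then have dz: "norm (z - c) < R" by (simp add: dist_norm norm_minus_commute)
    have "norm (z - fst w) = norm ((3*R) *\<^sub>R e + (z - c))" unfolding c_def by (simp add: algebra_simps)
    then have lo: "norm (z - fst w) > 2*R" and hi: "norm (z - fst w) \<le> 4*R"
      using norm_triangle_ineq[of "(3*R) *\<^sub>R e" "z - c"] norm_diff_ineq[of "(3*R) *\<^sub>R e" "z - c"]
        dz ne R by auto
    have "norm z > R" using lo nx norm_triangle_ineq4[of z "fst w"] by auto
    moreover have "norm z \<le> norm (z, snd w)" by (rule norm_fst_le)
    ultimately have "(z, snd w) \<notin> \<Omega>" using RO by fastforce
    then have uz: "u (z, snd w) = 0" using zero by auto
    have "norm (fst w - z) = norm (z - fst w)" by (rule norm_minus_commute)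
    then have pos: "norm (fst w - z) > 0" using lo R by linarith
    have "norm (fst w - z) powr d \<le> (4*R) powr d"
      using hi pos d by (intro powr_mono2) (auto simp: norm_minus_commute)
    then have "K \<le> \<bar>u w\<bar> powr p / norm (fst w - z) powr d"
      unfolding K_def using pos R by (intro divide_left_mono) (auto intro!: mult_pos_pos)
    then show ?thesis using True uz by (simp add: ennreal_leI)
  qed
  have "(\<integral>\<^sup>+ z. ennreal K * indicator (ball c R) z \<partial>lborel) = ennreal K * emeasure lborel (ball c R)"
    by (simp add: nn_integral_cmult_indicator)
  also have "\<dots> = ennreal K * ennreal (unit_ball_vol (real DIM('a)) * R ^ DIM('a))"
    using R by (simp add: emeasure_ball)
  also have "\<dots> = ennreal (\<bar>u w\<bar> powr p) * ennreal (unit_ball_vol (real DIM('a)) * R ^ DIM('a) / (4*R) powr d)"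
    unfolding K_def using R by (simp add: ennreal_mult'[symmetric] ennreal_mult[symmetric])
  finally have eq: "(\<integral>\<^sup>+ z. ennreal K * indicator (ball c R) z \<partial>lborel) = ennreal (\<bar>u w\<bar> powr p) * ennreal (unit_ball_vol (real DIM('a)) * R ^ DIM('a) / (4*R) powr d)" .
  have "(\<integral>\<^sup>+ z. ennreal K * indicator (ball c R) z \<partial>lborel) \<le> (\<integral>\<^sup>+ z. ennreal (\<bar>u (fst w, snd w) - u (z, snd w)\<bar> powr p
                 / norm (fst w - z) powr d) \<partial>lborel)"
    by (rule nn_integral_mono) (rule pt)
  then show ?thesis unfolding eq .
qed

theorem lemma2p6:
  fixes \<Omega> :: "('a::euclidean_space \<times> 'b::euclidean_space) set"
    and s p :: real
  assumes "bounded \<Omega>" and "open \<Omega>"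
    and "0 < s" and "s < 1" and "1 < p"
  shows "\<exists>C>0. \<forall>u \<in> aniso_W_tilde s p \<Omega>.
           Lp_norm_on p u \<Omega> \<le> C * aniso_seminorm s p u"
proof -
  obtain R0 where R0: "\<forall>w\<in>\<Omega>. norm w \<le> R0" using assms(1) bounded_iff by blast
  define R where "R = max R0 1"
  have R: "R > 0" unfolding R_def by simp
  have RO: "\<forall>w\<in>\<Omega>. norm w \<le> R" using R0 unfolding R_def by force
  define d where "d = real DIM('a) + s * p"
  have d: "d > 0" unfolding d_def using assms by (simp add: add_pos_nonneg)
  have p: "p > 0" using assms by simp
  define c where "c = unit_ball_vol (real DIM('a)) * R ^ DIM('a) / (4*R) powr d"
  have c: "c > 0" unfolding c_def using R by simp
  define C where "C = (1/c) powr (1/p)"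
  have C: "C > 0" unfolding C_def using c by simp
  show ?thesis
  proof (intro exI[of _ C] conjI C ballI)
    fix u assume u: "u \<in> aniso_W_tilde s p \<Omega>"
    then have meas: "u \<in> borel_measurable lborel"
      and fin: "(\<integral>\<^sup>+ w. ennreal (\<bar>u w\<bar> powr p) \<partial>lborel) < \<infinity>"
      and sfin: "aniso_seminorm_p s p u < \<infinity>"
      and zero: "\<forall>w. w \<notin> \<Omega> \<longrightarrow> u w = 0"
      unfolding aniso_W_tilde_def by auto
    define I where "I = (\<integral>\<^sup>+ w. ennreal (\<bar>u w\<bar> powr p) \<partial>lborel)"
    define S where "S = aniso_seminorm_p s p u"
    have "ennreal c * I = (\<integral>\<^sup>+ w. ennreal c * ennreal (\<bar>u w\<bar> powr p) \<partial>lborel)"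
      unfolding I_def using meas by (simp add: nn_integral_cmult)
    also have "\<dots> \<le> (\<integral>\<^sup>+ w. (\<integral>\<^sup>+ z. ennreal (\<bar>u (fst w, snd w) - u (z, snd w)\<bar> powr p
                 / norm (fst w - z) powr (real DIM('a) + s * p)) \<partial>lborel) \<partial>lborel)"
    proof (rule nn_integral_mono)
      fix w
      show "ennreal c * ennreal (\<bar>u w\<bar> powr p) \<le> (\<integral>\<^sup>+ z. ennreal (\<bar>u (fst w, snd w) - u (z, snd w)\<bar> powr p
                 / norm (fst w - z) powr (real DIM('a) + s * p)) \<partial>lborel)"
        using pointwise_bound[OF R RO zero p d, of w] unfolding c_def d_def
        by (subst mult.commute) assumption
    qed
    also have "\<dots> \<le> S" unfolding S_def aniso_seminorm_p_def by simp
    finally have cIS: "ennreal c * I \<le> S" .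
    have Ifin: "I \<noteq> \<infinity>" and Sfin: "S \<noteq> \<infinity>" using fin sfin unfolding I_def S_def by auto
    have "c * enn2real I \<le> enn2real S"
    proof -
      have "enn2real (ennreal c * I) \<le> enn2real S"
        using cIS Sfin by (intro enn2real_mono) (auto simp: top.not_eq_extremum)
      then show ?thesis using c by (simp add: enn2real_mult)
    qed
    then have IS: "enn2real I \<le> (1/c) * enn2real S" using c by (simp add: field_simps)
    have "(\<integral>\<^sup>+ w. ennreal (\<bar>u w\<bar> powr p) * indicator \<Omega> w \<partial>lborel) = I"
      unfolding I_def by (intro nn_integral_cong) (auto simp: indicator_def zero)
    then have "Lp_norm_on p u \<Omega> = enn2real I powr (1/p)" unfolding Lp_norm_on_def by simp
    also have "\<dots> \<le> ((1/c) * enn2real S) powr (1/p)"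
      using IS p by (intro powr_mono2) auto
    also have "\<dots> = C * aniso_seminorm s p u"
      unfolding C_def aniso_seminorm_def S_def using c by (subst powr_mult) auto
    finally show "Lp_norm_on p u \<Omega> \<le> C * aniso_seminorm s p u" .
  qed
qed

end
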